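(* Let $D$ be a link diagram on $S$ admitting a source-sink structure, and let $p$ be a point on an edge of $D$. Let $D\sqcup\bigcirc$ be the diagram obtained by adding a small contractible crossingless circle $O$ inside a small disk near $p$, disjoint from $D$. Identify $[[D\sqcup\bigcirc]]$ with $[[D]]\otimes V$, where the last factor corresponds to $O$; under this identification the differential $d_h$ of $D\sqcup\bigcirc$ is $d_h\otimes\mathrm{id}$. Then $[[D]]\otimes v_+$ is a subcomplex; denote the quotient complex by $[[D\sqcup\bigcirc]]_{v_+=0}$. Define two maps state by state. For a state $s$ of $D$, let $C_s$ be the circle of $D_s$ through $p$. - $\Phi\colon[[D]]\otimes V\to[[D]]$ merges $O$ into $C_s$: it applies $m_h$ to the factors of $C_s$ (first) and $O$ (second), and the identity on the other factors. - $\Psi\colon[[D]]\to[[D]]\otimes V$ splits $O$ off $C_s$: it applies $\Delta_h$ to the factor of $C_s$, producing factors for $C_s$ (first) and $O$ (second), and the identity on the other factors. Then the restriction $\Phi\colon[[D]]\otimes v_+\to[[D]]$ and the composition of $\Psi$ with the quotient map, $[[D]]\to[[D\sqcup\bigcirc]]_{v_+=0}$, are both isomorphisms of chain complexes with respect to $d_h$.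
   Context: Throughout, $S$ is a connected closed oriented surface and all vector spaces are over $\mathbb Z_2$. Links in $S\times[0,1]$ are represented by diagrams on $S$: 4-valent graphs embedded in $S$, possibly together with closed components that have no vertices, with over/under-crossing information at each crossing. A source-sink structure on a diagram $D$ is an orientation of the edges of $D$, viewed as a 4-valent graph, such that at each crossing the two incoming edges are opposite to each other and the two outgoing edges are opposite to each other. Let $\mathfrak L$ be the set of free homotopy classes of oriented loops in $S$, and let $\bigcirc$ be the class of contractible loops. Let $\mathfrak H$ be the quotient of the free abelian group on $\mathfrak L$ by $\bigcirc=0$ and $[\gamma]=[-\gamma]$, where $-\gamma$ is $\gamma$ with reversed orientation. A closed curve is trivial if it is contractible, and nontrivial otherwise. A state of $D$ is a map $s$ from the set of crossings to $\{0,1\}$. It determines the resolution $D_s$, a set of disjoint circles in $S$, by taking the $0$- or $1$-smoothing (Kauffman's $A$/$B$-smoothing) at each crossing. An edge $s\to s'$ of the state cube changes one crossing from $0$ to $1$. Its effect on circles is a merge of two circles into one, a split of one circle into two, or a one-circle-to-one-circle change. $V$ has basis $v_+,v_-$. $V(s)=\bigotimes_{C\in D_s}V$ and $[[D]]=\bigoplus_sV(s)$. Define linear maps on $V\otimes V\to V$: - $m(v_+\otimes v_+)=v_+$, $m(v_\pm\otimes v_\mp)=v_-$, $m(v_-\otimes v_-)=0$; - $m^0_h(v_\pm\otimes v_\mp)=v_-$, $m^0_h(v_+\otimes v_+)=m^0_h(v_-\otimes v_-)=0$; - $m^1_h(v_+\otimes v_+)=v_+$, $m^1_h(v_-\otimes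 v_+)=v_-$, and $m^1_h$ is $0$ on the other two basis vectors; - $m^2_h(v_+\otimes v_+)=v_+$, $m^2_h(v_+\otimes v_-)=v_-$, and $m^2_h$ is $0$ on the other two basis vectors. Define linear maps on $V\to V\otimes V$: - $\Delta(v_+)=v_+\otimes v_-+v_-\otimes v_+$, $\Delta(v_-)=v_-\otimes v_-$; - $\Delta^0_h(v_+)=v_+\otimes v_-+v_-\otimes v_+$, $\Delta^0_h(v_-)=0$; - $\Delta^1_h(v_+)=v_+\otimes v_-$, $\Delta^1_h(v_-)=v_-\otimes v_-$; - $\Delta^2_h(v_+)=v_-\otimes v_+$, $\Delta^2_h(v_-)=v_-\otimes v_-$. For a merge of $\gamma_1,\gamma_2$ (first and second factor) into $\gamma$, $m_h$ is: - $m$ if all three circles are trivial; - $m^1_h$ if only $\gamma_2$ is trivial; - $m^2_h$ if only $\gamma_1$ is trivial; - $m^0_h$ if only $\gamma$ is trivial; - $0$ if all three are nontrivial. For a split of $\gamma$ into $\gamma_1,\gamma_2$, $\Delta_h$ is $\Delta,\Delta^1_h,\Delta^2_h,\Delta^0_h,0$ in the same respective cases. The differential $d_h$ on $[[D]]$ is the sum over cube edges of: $m_h$ on the merging factors tensored with the identity, or $\Delta_h$ on the splitting factor tensored with the identity, or $0$ for a one-to-one change. *)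

theory Defs
  imports Main
begin

(* * crossings: a finite set X :: 'c set
   * a state s is identified with the set of crossings where it takes value 1
     (so s \<subseteq> X); a cube edge s \<rightarrow> insert x s, x \<in> X - s
   * circles of the resolution D_s: circ s :: 'k set; circles are labelled
     globally (a label denotes a curve in S), unchanged circles keep labels
   * triv k  <->  the circle k is contractible (trivial) in S
   * the effect of a cube edge on circles: ed s x
   * coefficients are Z_2; the basis vector v_+ is encoded by True,
     v_- by False.
   ------------------------------------------------------------------------ *)

datatype 'k ekind =
    Merge 'k 'k 'k   (* Merge g1 g2 g : g1 (first), g2 (second) merge into g *)
  | Split 'k 'k 'k   (* Split g g1 g2 : g splits into g1 (first), g2 (second) *)
  | OneOne 'k 'k

(* Z_2-vectors over a basis are finite sets of basis elements (sum =
   symmetric difference); the linear extension of a map given on basis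
   elements: *)
definition lin :: "('a \<Rightarrow> 'b set) \<Rightarrow> 'a set \<Rightarrow> 'b set" where
  "lin f v = {y. odd (card {b \<in> v. y \<in> f b})}"

definition vsum :: "'a set \<Rightarrow> 'a set \<Rightarrow> 'a set" where
  "vsum v w = (v - w) \<union> (w - v)"

(* maps V \<otimes> V \<rightarrow> V on basis vectors (a,b) = v_a \<otimes> v_b *)
fun m_std :: "bool \<times> bool \<Rightarrow> bool set" where
  "m_std (a, b) = (if a \<and> b then {True} else if a \<noteq> b then {False} else {})"
fun m0 :: "bool \<times> bool \<Rightarrow> bool set" where
  "m0 (a, b) = (if a \<noteq> b then {False} else {})"
fun m1 :: "bool \<times> bool \<Rightarrow> bool set" where
  "m1 (a, b) = (if a \<and> b then {True} else if \<not> a \<and> b then {False} else {})"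
fun m2 :: "bool \<times> bool \<Rightarrow> bool set" where
  "m2 (a, b) = (if a \<and> b then {True} else if a \<and> \<not> b then {False} else {})"

definition D_std :: "bool \<Rightarrow> (bool \<times> bool) set" where
  "D_std a = (if a then {(True, False), (False, True)} else {(False, False)})"
definition D0 :: "bool \<Rightarrow> (bool \<times> bool) set" where
  "D0 a = (if a then {(True, False), (False, True)} else {})"
definition D1 :: "bool \<Rightarrow> (bool \<times> bool) set" where
  "D1 a = (if a then {(True, False)} else {(False, False)})"
definition D2 :: "bool \<Rightarrow> (bool \<times> bool) set" where
  "D2 a = (if a then {(False, True)} else {(False, False)})"

(* m_h for a merge of \<gamma>1,\<gamma>2 into \<gamma>, with triviality t1 t2 t *)
definition m_h :: "bool \<Rightarrow> bool \<Rightarrow> bool \<Rightarrow> bool \<times> bool \<Rightarrow> bool set" where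
  "m_h t1 t2 t =
     (if t1 \<and> t2 \<and> t then m_std
      else if \<not> t1 \<and> t2 \<and> \<not> t then m1
      else if t1 \<and> \<not> t2 \<and> \<not> t then m2
      else if \<not> t1 \<and> \<not> t2 \<and> t then m0
      else (\<lambda>_. {}))"

(* \<Delta>_h for a split of \<gamma> into \<gamma>1,\<gamma>2, with triviality t t1 t2 *)
definition Delta_h :: "bool \<Rightarrow> bool \<Rightarrow> bool \<Rightarrow> bool \<Rightarrow> (bool \<times> bool) set" where
  "Delta_h t t1 t2 =
     (if t1 \<and> t2 \<and> t then D_std
      else if \<not> t1 \<and> t2 \<and> \<not> t then D1
      else if t1 \<and> \<not> t2 \<and> \<not> t then D2
      else if \<not> t1 \<and> \<not> t2 \<and> t then D0
      else (\<lambda>_. {}))"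

(* the only triviality patterns that occur topologically (listed cases) *)
definition triv_pattern :: "bool \<Rightarrow> bool \<Rightarrow> bool \<Rightarrow> bool" where
  "triv_pattern t1 t2 t \<longleftrightarrow>
     (t1 \<and> t2 \<and> t) \<or> (\<not> t1 \<and> t2 \<and> \<not> t) \<or> (t1 \<and> \<not> t2 \<and> \<not> t)
     \<or> (\<not> t1 \<and> \<not> t2 \<and> t) \<or> (\<not> t1 \<and> \<not> t2 \<and> \<not> t)"

(* basis of [[D]]: pairs (s, P), P = set of circles of D_s labelled v_+ *)
definition kb_basis :: "'c set \<Rightarrow> ('c set \<Rightarrow> 'k set) \<Rightarrow> ('c set \<times> 'k set) set" where
  "kb_basis X circ = {(s, P). s \<subseteq> X \<and> P \<subseteq> circ s}"

fun edge_img :: "('k \<Rightarrow> bool) \<Rightarrow> 'k ekind \<Rightarrow> 'c set \<Rightarrow> 'k set \<Rightarrow> ('c set \<times> 'k set) set" where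
  "edge_img triv (Merge g1 g2 g) s' P =
     (\<lambda>r. (s', (P - {g1, g2}) \<union> (if r then {g} else {})))
       ` m_h (triv g1) (triv g2) (triv g) (g1 \<in> P, g2 \<in> P)"
| "edge_img triv (Split g g1 g2) s' P =
     (\<lambda>(r1, r2). (s', (P - {g}) \<union> (if r1 then {g1} else {}) \<union> (if r2 then {g2} else {})))
       ` Delta_h (triv g) (triv g1) (triv g2) (g \<in> P)"
| "edge_img triv (OneOne g g') s' P = {}"

definition dh_basis :: "'c set \<Rightarrow> ('k \<Rightarrow> bool) \<Rightarrow> ('c set \<Rightarrow> 'c \<Rightarrow> 'k ekind)
     \<Rightarrow> 'c set \<times> 'k set \<Rightarrow> ('c set \<times> 'k set) set" where
  "dh_basis X triv ed sP = (case sP of (s, P) \<Rightarrow>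
      (\<Union>x \<in> X - s. edge_img triv (ed s x) (insert x s) P))"

definition dh :: "'c set \<Rightarrow> ('k \<Rightarrow> bool) \<Rightarrow> ('c set \<Rightarrow> 'c \<Rightarrow> 'k ekind)
     \<Rightarrow> ('c set \<times> 'k set) set \<Rightarrow> ('c set \<times> 'k set) set" where
  "dh X triv ed = lin (dh_basis X triv ed)"

definition cube_data :: "'c set \<Rightarrow> ('c set \<Rightarrow> 'k set) \<Rightarrow> ('k \<Rightarrow> bool)
     \<Rightarrow> ('c set \<Rightarrow> 'c \<Rightarrow> 'k ekind) \<Rightarrow> bool" where
  "cube_data X circ triv ed \<longleftrightarrow>
     finite X \<and> (\<forall>s. s \<subseteq> X \<longrightarrow> finite (circ s)) \<and>
     (\<forall>s x. s \<subseteq> X \<longrightarrow> x \<in> X - s \<longrightarrow>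
        (case ed s x of
           Merge g1 g2 g \<Rightarrow> g1 \<in> circ s \<and> g2 \<in> circ s \<and> g1 \<noteq> g2 \<and>
              g \<notin> circ s - {g1, g2} \<and> circ (insert x s) = insert g (circ s - {g1, g2}) \<and>
              triv_pattern (triv g1) (triv g2) (triv g)
         | Split g g1 g2 \<Rightarrow> g \<in> circ s \<and> g1 \<noteq> g2 \<and>
              g1 \<notin> circ s - {g} \<and> g2 \<notin> circ s - {g} \<and>
              circ (insert x s) = {g1, g2} \<union> (circ s - {g}) \<and>
              triv_pattern (triv g1) (triv g2) (triv g)
         | OneOne g g' \<Rightarrow> g \<in> circ s \<and> g' \<notin> circ s - {g} \<and>
              circ (insert x s) = insert g' (circ s - {g})))"

(* cp s = the circle C_s of D_s through the point p; consistency along edges *)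
definition point_data :: "'c set \<Rightarrow> ('c set \<Rightarrow> 'k set)
     \<Rightarrow> ('c set \<Rightarrow> 'c \<Rightarrow> 'k ekind) \<Rightarrow> ('c set \<Rightarrow> 'k) \<Rightarrow> bool" where
  "point_data X circ ed cp \<longleftrightarrow>
     (\<forall>s. s \<subseteq> X \<longrightarrow> cp s \<in> circ s) \<and>
     (\<forall>s x. s \<subseteq> X \<longrightarrow> x \<in> X - s \<longrightarrow>
        (case ed s x of
           Merge g1 g2 g \<Rightarrow> cp (insert x s) = (if cp s \<in> {g1, g2} then g else cp s)
         | Split g g1 g2 \<Rightarrow> (if cp s = g then cp (insert x s) \<in> {g1, g2}
                             else cp (insert x s) = cp s)
         | OneOne g g' \<Rightarrow> cp (insert x s) = (if cp s = g then g' else cp s)))"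

(* the diagram D \<squnion> O: circle labels 'k option, None = the new circle O *)
definition circO :: "('c set \<Rightarrow> 'k set) \<Rightarrow> 'c set \<Rightarrow> 'k option set" where
  "circO circ s = insert None (Some ` circ s)"
definition trivO :: "('k \<Rightarrow> bool) \<Rightarrow> 'k option \<Rightarrow> bool" where
  "trivO triv k = (case k of None \<Rightarrow> True | Some k' \<Rightarrow> triv k')"
definition edO :: "('c set \<Rightarrow> 'c \<Rightarrow> 'k ekind) \<Rightarrow> 'c set \<Rightarrow> 'c \<Rightarrow> 'k option ekind" where
  "edO ed s x = map_ekind Some (ed s x)"

(* basis of the subcomplex [[D]] \<otimes> v_+ (O labelled v_+) and of the
   complementary span, which represents the quotient [[D \<squnion> O]]_{v_+=0} *)
definition basis_plus :: "'c set \<Rightarrow> ('c set \<Rightarrow> 'k set) \<Rightarrow> ('c set \<times> 'k option set) set" where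
  "basis_plus X circ = {b \<in> kb_basis X (circO circ). None \<in> snd b}"
definition basis_minus :: "'c set \<Rightarrow> ('c set \<Rightarrow> 'k set) \<Rightarrow> ('c set \<times> 'k option set) set" where
  "basis_minus X circ = {b \<in> kb_basis X (circO circ). None \<notin> snd b}"

definition Phi_basis :: "('k \<Rightarrow> bool) \<Rightarrow> ('c set \<Rightarrow> 'k)
     \<Rightarrow> 'c set \<times> 'k option set \<Rightarrow> ('c set \<times> 'k set) set" where
  "Phi_basis triv cp sP = (case sP of (s, P) \<Rightarrow>
     (\<lambda>r. (s, {k. Some k \<in> P \<and> k \<noteq> cp s} \<union> (if r then {cp s} else {})))
       ` m_h (triv (cp s)) True (triv (cp s)) (Some (cp s) \<in> P, None \<in> P))"

definition Psi_basis :: "('k \<Rightarrow> bool) \<Rightarrow> ('c set \<Rightarrow> 'k)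
     \<Rightarrow> 'c set \<times> 'k set \<Rightarrow> ('c set \<times> 'k option set) set" where
  "Psi_basis triv cp sP = (case sP of (s, P) \<Rightarrow>
     (\<lambda>(r1, r2). (s, Some ` (P - {cp s}) \<union> (if r1 then {Some (cp s)} else {})
                     \<union> (if r2 then {None} else {})))
       ` Delta_h (triv (cp s)) (triv (cp s)) True (cp s \<in> P))"

definition chain_iso :: "'a set \<Rightarrow> ('a set \<Rightarrow> 'a set) \<Rightarrow> 'b set \<Rightarrow> ('b set \<Rightarrow> 'b set)
     \<Rightarrow> ('a set \<Rightarrow> 'b set) \<Rightarrow> bool" where
  "chain_iso BA dA BB dB L \<longleftrightarrow>
     (\<forall>v w. v \<subseteq> BA \<longrightarrow> w \<subseteq> BA \<longrightarrow> L (vsum v w) = vsum (L v) (L w)) \<and>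
     bij_betw L (Pow BA) (Pow BB) \<and>
     (\<forall>v. v \<subseteq> BA \<longrightarrow> L (dA v) = dB (L v))"

end

theory Submission
  imports Defs
begin

definition chi :: "'k option set \<Rightarrow> 'c set \<times> 'k set \<Rightarrow> 'c set \<times> 'k option set" where
  "chi N b = (fst b, Some ` snd b \<union> N)"

definition phi :: "'c set \<times> 'k option set \<Rightarrow> 'c set \<times> 'k set" where
  "phi b = (fst b, {k. Some k \<in> snd b})"

lemma phi_chi: "N \<subseteq> {None} \<Longrightarrow> phi (chi N b) = b"
  unfolding phi_def chi_def by (cases b) auto

lemma inj_chi: "N \<subseteq> {None} \<Longrightarrow> inj (chi N)"
  by (metis injI phi_chi)

lemma edge_chi:
  assumes "N \<subseteq> {None}"
  shows "edge_img (trivO triv) (map_ekind Some e) s' (Some ` Q \<union> N)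
         = (\<lambda>b. chi N b) ` edge_img triv e s' Q"
proof (cases e)
  case (Merge g1 g2 g)
  have m1: "(Some g1 \<in> Some ` Q \<union> N) = (g1 \<in> Q)" "(Some g2 \<in> Some ` Q \<union> N) = (g2 \<in> Q)"
    using assms by auto
  have e: "\<And>r. (Some ` Q \<union> N) - {Some g1, Some g2} \<union> (if r then {Some g} else {})
       = Some ` ((Q - {g1, g2}) \<union> (if r then {g} else {})) \<union> N"
    using assms by auto
  show ?thesis using Merge
    by (simp only: edge_img.simps ekind.map m1 e) (simp add: trivO_def chi_def image_image)
next
  case (Split g g1 g2)
  have m1: "(Some g \<in> Some ` Q \<union> N) = (g \<in> Q)"
    using assms by auto
  have e: "\<And>r1 r2. (Some ` Q \<union> N) - {Some g} \<union> (if r1 then {Some g1} else {}) \<union> (if r2 then {Some g2} else {})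
       = Some ` ((Q - {g}) \<union> (if r1 then {g1} else {}) \<union> (if r2 then {g2} else {})) \<union> N"
    using assms by auto
  have ee: "(\<lambda>(r1, r2). (s', (Some ` Q \<union> N) - {Some g} \<union> (if r1 then {Some g1} else {}) \<union> (if r2 then {Some g2} else {})))
     = chi N \<circ> (\<lambda>(r1, r2). (s', (Q - {g}) \<union> (if r1 then {g1} else {}) \<union> (if r2 then {g2} else {})))"
    by (auto simp: e chi_def)
  show ?thesis using Split
    by (simp only: edge_img.simps ekind.map m1 ee image_comp) (simp add: trivO_def)
next
  case (OneOne g g')
  then show ?thesis by simp
qed

lemma dh_basis_chi:
  assumes "N \<subseteq> {None}"
  shows "dh_basis X (trivO triv) (edO ed) (chi N b) = chi N ` dh_basis X triv ed b"
proof -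
  obtain s P where b: "b = (s, P)" by (cases b)
  show ?thesis
    unfolding b dh_basis_def edO_def
    by (simp add: edge_chi[OF assms, unfolded chi_def] chi_def image_UN)
qed

lemma lin_inj:
  assumes inj: "inj h" and gf: "\<And>b. b \<in> v \<Longrightarrow> g (h b) = h ` f b"
  shows "lin g (h ` v) = h ` lin f v"
proof (rule set_eqI)
  fix y
  show "y \<in> lin g (h ` v) \<longleftrightarrow> y \<in> h ` lin f v"
  proof (cases "y \<in> range h")
    case True
    then obtain z where z: "y = h z" by auto
    have "{c \<in> h ` v. y \<in> g c} = h ` {b \<in> v. z \<in> f b}"
      using gf inj z by (auto simp: inj_eq image_iff)
    then have "card {c \<in> h ` v. y \<in> g c} = card {b \<in> v. z \<in> f b}"
      using inj by (simp add: card_image inj_on_subset)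
    then show ?thesis using z inj by (auto simp: lin_def inj_eq)
  next
    case False
    have E: "{c \<in> h ` v. y \<in> g c} = {}" using False gf by auto
    have "y \<notin> lin g (h ` v)" by (simp only: lin_def mem_Collect_eq E) simp
    then show ?thesis using False by blast
  qed
qed

lemma lin_single:
  assumes "\<And>b. b \<in> v \<Longrightarrow> f b = {h b}" and "inj_on h v"
  shows "lin f v = h ` v"
proof (rule set_eqI)
  fix y
  show "y \<in> lin f v \<longleftrightarrow> y \<in> h ` v"
  proof (cases "y \<in> h ` v")
    case True
    then obtain z where z: "z \<in> v" "y = h z" by auto
    have "{b \<in> v. y \<in> f b} = {z}" using assms z by (auto simp: inj_on_def)
    then show ?thesis using True by (simp add: lin_def)
  next
    case False
    have E: "{b \<in> v. y \<in> f b} = {}" using False assms by auto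
    have "y \<notin> lin f v" by (simp only: lin_def mem_Collect_eq E) simp
    then show ?thesis using False by blast
  qed
qed

lemma dh_chi:
  assumes "N \<subseteq> {None}"
  shows "dh X (trivO triv) (edO ed) (chi N ` u) = chi N ` dh X triv ed u"
  unfolding dh_def
  by (rule lin_inj[OF inj_chi[OF assms]]) (rule dh_basis_chi[OF assms])

lemma m_h_plus: "m_h t True t (a, True) = {a}"
  by (cases t; cases a) (simp_all add: m_h_def)

lemma Phi_chi: "Phi_basis triv cp (chi {None} b) = {b}"
proof -
  obtain s R where b: "b = (s, R)" by (cases b)
  have "{k. Some k \<in> Some ` R \<union> {None} \<and> k \<noteq> cp s} \<union> (if cp s \<in> R then {cp s} else {}) = R"
    by auto
  moreover have "(Some (cp s) \<in> Some ` R \<union> {None}) = (cp s \<in> R)" by auto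
  ultimately show ?thesis unfolding b Phi_basis_def chi_def
    by (simp add: m_h_plus del: Un_insert_right)
qed

lemma Psi_chi: "Psi_basis triv cp b \<inter> {x. None \<notin> snd x} = {chi {} b}"
proof -
  obtain s P where b: "b = (s, P)" by (cases b)
  have e1: "insert (Some (cp s)) (Some ` (P - {cp s})) = Some ` P" if "cp s \<in> P"
    using that by auto
  have e2: "Some ` (P - {cp s}) = Some ` P" if "cp s \<notin> P"
    using that by auto
  have n: "None \<notin> Some ` A" for A :: "'a set" by auto
  show ?thesis
    unfolding b Psi_basis_def chi_def
    by (cases "triv (cp s)"; cases "cp s \<in> P")
       (simp_all add: Delta_h_def D_std_def D1_def e1 e2 n)
qed
lemma lin_sub: "lin f u \<subseteq> \<Union> (f ` u)"
proof
  fix y assume "y \<in> lin f u"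
  then have "{b \<in> u. y \<in> f b} \<noteq> {}" unfolding lin_def by (metis (no_types) card.empty even_zero mem_Collect_eq)
  then show "y \<in> \<Union> (f ` u)" by auto
qed

lemma dh_closed:
  assumes cd: "cube_data X circ triv ed" and u: "u \<subseteq> kb_basis X circ"
  shows "dh X triv ed u \<subseteq> kb_basis X circ"
proof -
  have H: "dh_basis X triv ed b \<subseteq> kb_basis X circ" if bK: "b \<in> kb_basis X circ" for b
  proof -
    obtain s P where b: "b = (s, P)" by (cases b)
    have sX: "s \<subseteq> X" and PC: "P \<subseteq> circ s" using bK b by (auto simp: kb_basis_def split: if_splits)
    have E: "edge_img triv (ed s x) (insert x s) P \<subseteq> kb_basis X circ" if x: "x \<in> X - s" for x
    proof -
      have C: "case ed s x of
           Merge g1 g2 g \<Rightarrow> g1 \<in> circ s \<and> g2 \<in> circ s \<and> g1 \<noteq> g2 \<and>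
              g \<notin> circ s - {g1, g2} \<and> circ (insert x s) = insert g (circ s - {g1, g2}) \<and>
              triv_pattern (triv g1) (triv g2) (triv g)
         | Split g g1 g2 \<Rightarrow> g \<in> circ s \<and> g1 \<noteq> g2 \<and>
              g1 \<notin> circ s - {g} \<and> g2 \<notin> circ s - {g} \<and>
              circ (insert x s) = {g1, g2} \<union> (circ s - {g}) \<and>
              triv_pattern (triv g1) (triv g2) (triv g)
         | OneOne g g' \<Rightarrow> g \<in> circ s \<and> g' \<notin> circ s - {g} \<and>
              circ (insert x s) = insert g' (circ s - {g})"
        using cd sX x unfolding cube_data_def by blast
      show ?thesis
      proof (cases "ed s x")
        case (Merge g1 g2 g)
        then have ci: "circ (insert x s) = insert g (circ s - {g1, g2})" using C by simp
        have sub: "(P - {g1, g2}) \<union> (if r then {g} else {}) \<subseteq> circ (insert x s)" for r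
          unfolding ci using PC by (cases r) auto
        have ins: "insert x s \<subseteq> X" using sX x by blast
        show ?thesis unfolding Merge edge_img.simps
          using sub ins by (auto simp: kb_basis_def simp del: Un_iff Un_subset_iff)
      next
        case (Split g g1 g2)
        then have ci: "circ (insert x s) = {g1, g2} \<union> (circ s - {g})" using C by simp
        have sub: "(P - {g}) \<union> (if r1 then {g1} else {}) \<union> (if r2 then {g2} else {}) \<subseteq> circ (insert x s)" for r1 r2
          unfolding ci using PC by (cases r1; cases r2) auto
        have ins: "insert x s \<subseteq> X" using sX x by blast
        show ?thesis unfolding Split edge_img.simps
        proof (rule image_subsetI)
          fix rr :: "bool \<times> bool"
          obtain r1 r2 where rr: "rr = (r1, r2)" by (cases rr)
          show "(case rr of (r1, r2) \<Rightarrow> (insert x s, P - {g} \<union> (if r1 then {g1} else {}) \<union> (if r2 then {g2} else {})))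
                \<in> kb_basis X circ"
            unfolding rr kb_basis_def using sub[of r1 r2] ins by simp
        qed
      next
        case (OneOne g g')
        then show ?thesis by simp
      qed
    qed
    show ?thesis unfolding b dh_basis_def prod.case by (rule UN_least) (rule E)
  qed
  have "\<Union> (dh_basis X triv ed ` u) \<subseteq> kb_basis X circ"
    using H u by (meson UN_least subsetD)
  then show ?thesis unfolding dh_def using lin_sub[of "dh_basis X triv ed" u] by (rule order.trans[rotated])
qed

lemma vsum_img: "inj h \<Longrightarrow> h ` vsum v w = vsum (h ` v) (h ` w)"
  unfolding vsum_def by (simp add: image_Un image_set_diff)

lemma Bp_chi: "chi {None} ` kb_basis X circ = basis_plus X circ"
proof (rule set_eqI)
  fix b :: "'a set \<times> 'b option set"
  obtain s P where b: "b = (s, P)" by (cases b)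
  show "b \<in> chi {None} ` kb_basis X circ \<longleftrightarrow> b \<in> basis_plus X circ"
  proof
    assume "b \<in> chi {None} ` kb_basis X circ"
    then show "b \<in> basis_plus X circ"
      by (auto simp: chi_def kb_basis_def basis_plus_def circO_def)
  next
    assume H: "b \<in> basis_plus X circ"
    then have sX: "s \<subseteq> X" and PO: "P \<subseteq> insert None (Some ` circ s)" and N: "None \<in> P"
      by (auto simp: b basis_plus_def kb_basis_def circO_def)
    have "P = Some ` {k. Some k \<in> P} \<union> {None}"
    proof (rule set_eqI)
      fix x show "x \<in> P \<longleftrightarrow> x \<in> Some ` {k. Some k \<in> P} \<union> {None}"
        using N by (cases x) auto
    qed
    moreover have "{k. Some k \<in> P} \<subseteq> circ s" using PO by auto
    ultimately show "b \<in> chi {None} ` kb_basis X circ"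
      unfolding b chi_def kb_basis_def using sX
      by (intro image_eqI[of _ _ "(s, {k. Some k \<in> P})"]) auto
  qed
qed

lemma Bm_chi: "chi {} ` kb_basis X circ = basis_minus X circ"
proof (rule set_eqI)
  fix b :: "'a set \<times> 'b option set"
  obtain s P where b: "b = (s, P)" by (cases b)
  show "b \<in> chi {} ` kb_basis X circ \<longleftrightarrow> b \<in> basis_minus X circ"
  proof
    assume "b \<in> chi {} ` kb_basis X circ"
    then show "b \<in> basis_minus X circ"
      by (auto simp: chi_def kb_basis_def basis_minus_def circO_def)
  next
    assume H: "b \<in> basis_minus X circ"
    then have sX: "s \<subseteq> X" and PO: "P \<subseteq> insert None (Some ` circ s)" and N: "None \<notin> P"
      by (auto simp: b basis_minus_def kb_basis_def circO_def)
    have "P = Some ` {k. Some k \<in> P} \<union> {}"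
    proof (rule set_eqI)
      fix x show "x \<in> P \<longleftrightarrow> x \<in> Some ` {k. Some k \<in> P} \<union> {}"
        using N by (cases x) auto
    qed
    moreover have "{k. Some k \<in> P} \<subseteq> circ s" using PO by auto
    ultimately show "b \<in> chi {} ` kb_basis X circ"
      unfolding b chi_def kb_basis_def using sX
      by (intro image_eqI[of _ _ "(s, {k. Some k \<in> P})"]) auto
  qed
qed

lemma LPhi: "lin (Phi_basis triv cp) (chi {None} ` w) = w"
proof -
  have "lin (Phi_basis triv cp) (chi {None} ` w) = phi ` (chi {None} ` w)"
    by (rule lin_single) (auto simp: Phi_chi phi_chi inj_on_def)
  also have "\<dots> = w" by (simp add: image_image phi_chi)
  finally show ?thesis .
qed

lemma LPsi: "lin (Psi_basis triv cp) w \<inter> basis_minus X circ = chi {} ` w \<inter> basis_minus X circ"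
proof -
  have M: "basis_minus X circ \<subseteq> {x. None \<notin> snd x}" by (auto simp: basis_minus_def)
  have "lin (Psi_basis triv cp) w \<inter> basis_minus X circ
      = lin (\<lambda>b. Psi_basis triv cp b \<inter> {x. None \<notin> snd x}) w \<inter> basis_minus X circ"
  proof (rule set_eqI)
    fix y
    show "y \<in> lin (Psi_basis triv cp) w \<inter> basis_minus X circ \<longleftrightarrow>
          y \<in> lin (\<lambda>b. Psi_basis triv cp b \<inter> {x. None \<notin> snd x}) w \<inter> basis_minus X circ"
    proof (cases "y \<in> basis_minus X circ")
      case True
      then have "{b \<in> w. y \<in> Psi_basis triv cp b} = {b \<in> w. y \<in> Psi_basis triv cp b \<inter> {x. None \<notin> snd x}}"
        using M by auto
      then show ?thesis unfolding lin_def by simp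
    qed simp
  qed
  also have "lin (\<lambda>b. Psi_basis triv cp b \<inter> {x. None \<notin> snd x}) w = chi {} ` w"
    using inj_on_subset[OF inj_chi[of "{}"] subset_UNIV]
    by (intro lin_single) (auto simp: Psi_chi)
  finally show ?thesis .
qed

theorem lemma1:
  fixes X :: "'c set" and circ :: "'c set \<Rightarrow> 'k set" and triv :: "'k \<Rightarrow> bool"
    and ed :: "'c set \<Rightarrow> 'c \<Rightarrow> 'k ekind" and cp :: "'c set \<Rightarrow> 'k"
  assumes "cube_data X circ triv ed"
    and "point_data X circ ed cp"
  shows "(\<forall>v. v \<subseteq> basis_plus X circ \<longrightarrow>
            dh X (trivO triv) (edO ed) v \<subseteq> basis_plus X circ)
    \<and> chain_iso (basis_plus X circ) (dh X (trivO triv) (edO ed))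
                (kb_basis X circ) (dh X triv ed)
                (lin (Phi_basis triv cp))
    \<and> chain_iso (kb_basis X circ) (dh X triv ed)
                (basis_minus X circ)
                (\<lambda>w. dh X (trivO triv) (edO ed) w \<inter> basis_minus X circ)
                (\<lambda>v. lin (Psi_basis triv cp) v \<inter> basis_minus X circ)"
proof -
  let ?K = "kb_basis X circ" and ?Bp = "basis_plus X circ" and ?Bm = "basis_minus X circ"
  let ?dA = "dh X (trivO triv) (edO ed)" and ?dB = "dh X triv ed"
  let ?L = "lin (Phi_basis triv cp)"
  let ?L' = "\<lambda>v. lin (Psi_basis triv cp) v \<inter> basis_minus X circ"
  have injP: "inj (chi {None})" and inj0: "inj (chi {})" by (auto intro: inj_chi)
  have decP: "\<exists>u. u \<subseteq> ?K \<and> v = chi {None} ` u" if "v \<subseteq> ?Bp" for v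
  proof -
    have "v \<subseteq> chi {None} ` ?K" using that by (simp only: Bp_chi)
    then show ?thesis unfolding subset_image_iff .
  qed
  have p1: "\<forall>v. v \<subseteq> ?Bp \<longrightarrow> ?dA v \<subseteq> ?Bp"
  proof (intro allI impI)
    fix v assume "v \<subseteq> ?Bp"
    then have "\<exists>u. u \<subseteq> ?K \<and> v = chi {None} ` u" by (rule decP)
    then obtain u where u: "u \<subseteq> ?K" "v = chi {None} ` u" by blast
    have "?dA v = chi {None} ` ?dB u" using u dh_chi[of "{None}"] by simp
    also have "\<dots> \<subseteq> chi {None} ` ?K" using dh_closed[OF assms(1) u(1)] by blast
    finally have "?dA v \<subseteq> chi {None} ` ?K" .
    then show "?dA v \<subseteq> ?Bp" by (simp only: Bp_chi)
  qed
  have p2: "chain_iso ?Bp ?dA ?K ?dB ?L"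
    unfolding chain_iso_def
  proof (intro conjI allI impI)
    fix v w assume vw: "v \<subseteq> ?Bp" "w \<subseteq> ?Bp"
    obtain v' where "v = chi {None} ` v'" using decP[OF vw(1)] by blast
    moreover obtain w' where "w = chi {None} ` w'" using decP[OF vw(2)] by blast
    ultimately show "?L (vsum v w) = vsum (?L v) (?L w)"
      by (simp add: vsum_img[OF injP, symmetric] LPhi)
  next
    show "bij_betw ?L (Pow ?Bp) (Pow ?K)"
    proof (rule bij_betw_byWitness[where f' = "image (chi {None})"])
      show "\<forall>a\<in>Pow ?Bp. chi {None} ` ?L a = a"
      proof
        fix a assume "a \<in> Pow ?Bp"
        then have "a \<subseteq> ?Bp" by simp
        then have "\<exists>u. u \<subseteq> ?K \<and> a = chi {None} ` u" by (rule decP)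
        then obtain u where "u \<subseteq> ?K" "a = chi {None} ` u" by blast
        then show "chi {None} ` ?L a = a" by (simp add: LPhi)
      qed
      show "\<forall>a'\<in>Pow ?K. ?L (chi {None} ` a') = a'" by (simp add: LPhi)
      show "?L ` Pow ?Bp \<subseteq> Pow ?K"
      proof
        fix b assume "b \<in> ?L ` Pow ?Bp"
        then obtain a where a: "a \<in> Pow ?Bp" "b = ?L a" by blast
        then have "a \<subseteq> ?Bp" by simp
        then have "\<exists>u. u \<subseteq> ?K \<and> a = chi {None} ` u" by (rule decP)
        then obtain u where "u \<subseteq> ?K" "a = chi {None} ` u" by blast
        then show "b \<in> Pow ?K" using a by (simp add: LPhi)
      qed
      show "image (chi {None}) ` Pow ?K \<subseteq> Pow ?Bp"
        using Bp_chi[of X circ] by auto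
    qed
  next
    fix v assume "v \<subseteq> ?Bp"
    then have "\<exists>u. u \<subseteq> ?K \<and> v = chi {None} ` u" by (rule decP)
    then obtain u where u: "u \<subseteq> ?K" "v = chi {None} ` u" by blast
    show "?L (?dA v) = ?dB (?L v)"
      using u by (simp add: dh_chi LPhi)
  qed
  have L'img: "?L' v = chi {} ` v" if "v \<subseteq> ?K" for v
    using that Bm_chi[of X circ] LPsi[of triv cp v X circ] by blast
  have p3: "chain_iso ?K ?dB ?Bm (\<lambda>w. ?dA w \<inter> ?Bm) ?L'"
    unfolding chain_iso_def
  proof (intro conjI allI impI)
    fix v w assume vw: "v \<subseteq> ?K" "w \<subseteq> ?K"
    then have "vsum v w \<subseteq> ?K" by (auto simp: vsum_def)
    then show "?L' (vsum v w) = vsum (?L' v) (?L' w)"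
      using vw by (simp add: L'img vsum_img[OF inj0])
  next
    have "bij_betw (chi {}) ?K ?Bm"
      using Bm_chi[of X circ] inj_on_subset[OF inj0 subset_UNIV] by (simp add: bij_betw_def)
    then have "bij_betw (image (chi {})) (Pow ?K) (Pow ?Bm)" by (rule bij_betw_Pow)
    then show "bij_betw ?L' (Pow ?K) (Pow ?Bm)"
      by (rule bij_betw_cong[THEN iffD1, rotated]) (simp add: L'img)
  next
    fix v assume v: "v \<subseteq> ?K"
    show "?L' (?dB v) = ?dA (?L' v) \<inter> ?Bm"
    proof -
      have e1: "?L' v = chi {} ` v" by (rule L'img[OF v])
      have e2: "?L' (?dB v) = chi {} ` ?dB v \<inter> ?Bm" by (rule LPsi)
      have e3: "?dA (chi {} ` v) = chi {} ` ?dB v" by (rule dh_chi) simp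
      show ?thesis unfolding e1 e2 e3 ..
    qed
  qed
  show ?thesis using p1 p2 p3 by blast
qed

end
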